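(* The solution $u$ of the problem "find $u\in X$ with $a(u,v)=F(v)$ for all $v\in X$" satisfies: (i) $u\in X^{(\mathbf{C})}$; (ii) $u\in X^{(\gamma\mathbf{C})}$ if $\gamma\in L^1_\Gamma(\mathbb{R}^\mu)$; (iii) $u\in X^{(\gamma^2)}$ if $\gamma\in L^2_\Gamma(\mathbb{R}^\mu)$.
   Context: $D\subset\mathbb{R}^d$ bounded open with smooth boundary; $f\in H^{-1}(D)$; $\Gamma=\Gamma_{N_g}\otimes\Gamma_\nu$ a product probability measure on $\mathbb{R}^\mu=\mathbb{R}^{N_g}\times\mathbb{R}^\nu$, $E_\Gamma$ integration against it. $[\mathrm{C}]:D\times\mathbb{R}^\mu\to\mathbb{M}_n^+(\mathbb{R})$ measurable (the parameterized random field coefficient $\mathcal{K}^{(m,N)}(\mathbf{x},\mathbf{y},\mathcal{M}_{[a]}(\mathbf{z}))$ in the paper) with a constant $\alpha>0$ and positive measurable $\gamma<\infty$ on $\mathbb{R}^\mu$ such that $\Gamma$-a.e. and a.e. in $\mathbf{x}$, $\alpha\|\mathbf{h}\|_2^2\le\langle[\mathrm{C}]\mathbf{h},\mathbf{h}\rangle_2\le\gamma\|\mathbf{h}\|_2^2$. $X=H^1_0(D)\otimes L^2_\Gamma(\mathbb{R}^\mu)$, $\|v\|_X^2=E_\Gamma(\int_D\|\nabla v\|_2^2)$; $a(u,v)=E_\Gamma(\int_D\nabla v\cdot[\mathrm{C}]\nabla u\,d\mathbf{x})$; $F(v)=E_\Gamma(f(v))$. For $s,r\ge0$, $X^{(\gamma^s\mathbf{C}^r)}$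 is the space of functions $v$ on $D\times\mathbb{R}^\mu$ with $\|v\|_{X^{(\gamma^s\mathbf{C}^r)}}^2=E_\Gamma(\gamma^s\int_D\nabla v\cdot[\mathrm{C}]^r\nabla v\,d\mathbf{x})<\infty$. The problem has a unique solution $u\in X$. *)

theory Defs
  imports "HOL-Analysis.Analysis" "HOL-Probability.Probability"
begin

definition partial :: "'d::finite \<Rightarrow> (real^'d \<Rightarrow> real) \<Rightarrow> real^'d \<Rightarrow> real" where
  "partial i f x = frechet_derivative f (at x) (axis i 1)"

fun iter_partial :: "'d::finite list \<Rightarrow> (real^'d \<Rightarrow> real) \<Rightarrow> real^'d \<Rightarrow> real" where
  "iter_partial [] f = f"
| "iter_partial (i # is) f = partial i (iter_partial is f)"

definition smooth_on :: "(real^'d::finite) set \<Rightarrow> (real^'d \<Rightarrow> real) \<Rightarrow> bool" where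
  "smooth_on S f \<longleftrightarrow> (\<forall>is. (iter_partial is f) differentiable_on S)"

definition grad :: "(real^'d::finite \<Rightarrow> real) \<Rightarrow> real^'d \<Rightarrow> real^'d" where
  "grad f x = (\<chi> i. partial i f x)"

definition test_fun :: "(real^'d::finite) set \<Rightarrow> (real^'d \<Rightarrow> real) \<Rightarrow> bool" where
  "test_fun D \<phi> \<longleftrightarrow> smooth_on UNIV \<phi> \<and> compact (closure {x. \<phi> x \<noteq> 0})
      \<and> closure {x. \<phi> x \<noteq> 0} \<subseteq> D"

definition smooth_boundary :: "(real^'d::finite) set \<Rightarrow> bool" where
  "smooth_boundary D \<longleftrightarrow> (\<forall>x\<in>frontier D. \<exists>r>0. \<exists>\<rho>. smooth_on (ball x r) \<rho> \<and>
      grad \<rho> x \<noteq> 0 \<and> D \<inter> ball x r = {z\<in>ball x r. \<rho> z < 0})"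

definition is_weak_grad :: "(real^'d::finite) set \<Rightarrow> (real^'d \<Rightarrow> real) \<Rightarrow> (real^'d \<Rightarrow> real^'d) \<Rightarrow> bool" where
  "is_weak_grad D v g \<longleftrightarrow>
     (\<forall>K. compact K \<and> K \<subseteq> D \<longrightarrow> set_integrable lborel K v \<and> set_integrable lborel K g) \<and>
     (\<forall>\<phi>. test_fun D \<phi> \<longrightarrow> (\<forall>i.
        (LINT x:D|lborel. v x * partial i \<phi> x) = - (LINT x:D|lborel. g x $ i * \<phi> x)))"

definition H10 :: "(real^'d::finite) set \<Rightarrow> (real^'d \<Rightarrow> real) set" where
  "H10 D = {v. \<exists>g. is_weak_grad D v g \<and>
      set_integrable lborel D (\<lambda>x. (v x)\<^sup>2) \<and> set_integrable lborel D (\<lambda>x. (norm (g x))\<^sup>2) \<and>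
      (\<exists>\<phi>. (\<forall>k. test_fun D (\<phi> k)) \<and>
         (\<lambda>k. LINT x:D|lborel. (v x - \<phi> k x)\<^sup>2 + (norm (g x - grad (\<phi> k) x))\<^sup>2) \<longlonglongrightarrow> 0)}"

definition wgrad :: "(real^'d::finite) set \<Rightarrow> (real^'d \<Rightarrow> real) \<Rightarrow> real^'d \<Rightarrow> real^'d" where
  "wgrad D v = (SOME g. is_weak_grad D v g)"

definition Hminus1 :: "(real^'d::finite) set \<Rightarrow> ((real^'d \<Rightarrow> real) \<Rightarrow> real) set" where
  "Hminus1 D = {f. (\<forall>v\<in>H10 D. \<forall>w\<in>H10 D. \<forall>a b. f (\<lambda>x. a * v x + b * w x) = a * f v + b * f w) \<and>
      (\<exists>B. \<forall>v\<in>H10 D. \<bar>f v\<bar> \<le> B * sqrt (LINT x:D|lborel. (norm (wgrad D v x))\<^sup>2))}"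

definition X_grad_ok :: "(real^'d::finite) set \<Rightarrow> 'y measure \<Rightarrow> (real^'d \<Rightarrow> 'y \<Rightarrow> real)
    \<Rightarrow> (real^'d \<Rightarrow> 'y \<Rightarrow> real^'d) \<Rightarrow> bool" where
  "X_grad_ok D \<Gamma> u G \<longleftrightarrow>
     (\<lambda>(x,y). u x y) \<in> borel_measurable (restrict_space lborel D \<Otimes>\<^sub>M \<Gamma>) \<and>
     (\<lambda>(x,y). G x y) \<in> borel_measurable (restrict_space lborel D \<Otimes>\<^sub>M \<Gamma>) \<and>
     (AE y in \<Gamma>. (\<lambda>x. u x y) \<in> H10 D \<and> is_weak_grad D (\<lambda>x. u x y) (\<lambda>x. G x y))"

definition X_space :: "(real^'d::finite) set \<Rightarrow> 'y measure \<Rightarrow> (real^'d \<Rightarrow> 'y \<Rightarrow> real) set" where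
  "X_space D \<Gamma> = {u. \<exists>G. X_grad_ok D \<Gamma> u G \<and>
      (\<integral>\<^sup>+ y. (\<integral>\<^sup>+ x. indicator D x * ennreal ((norm (G x y))\<^sup>2) \<partial>lborel) \<partial>\<Gamma>) < \<infinity>}"

definition Xgrad :: "(real^'d::finite) set \<Rightarrow> 'y measure \<Rightarrow> (real^'d \<Rightarrow> 'y \<Rightarrow> real)
    \<Rightarrow> real^'d \<Rightarrow> 'y \<Rightarrow> real^'d" where
  "Xgrad D \<Gamma> u = (SOME G. X_grad_ok D \<Gamma> u G)"

definition a_form :: "(real^'d::finite) set \<Rightarrow> 'y measure \<Rightarrow> (real^'d \<Rightarrow> 'y \<Rightarrow> real^'d^'d)
    \<Rightarrow> (real^'d \<Rightarrow> 'y \<Rightarrow> real) \<Rightarrow> (real^'d \<Rightarrow> 'y \<Rightarrow> real) \<Rightarrow> real" where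
  "a_form D \<Gamma> C u v = (\<integral>y. (LINT x:D|lborel. Xgrad D \<Gamma> v x y \<bullet> (C x y *v Xgrad D \<Gamma> u x y)) \<partial>\<Gamma>)"

definition F_form :: "'y measure \<Rightarrow> ((real^'d::finite \<Rightarrow> real) \<Rightarrow> real)
    \<Rightarrow> (real^'d \<Rightarrow> 'y \<Rightarrow> real) \<Rightarrow> real" where
  "F_form \<Gamma> f v = (\<integral>y. f (\<lambda>x. v x y) \<partial>\<Gamma>)"

text \<open>The paper's X^{(gamma^s C^r)} is the case
  w = gamma^s, K = [C]^r; we need (s,r) = (0,1), (1,1), (2,0) (with [C]^0 = identity).\<close>
definition X_weighted :: "(real^'d::finite) set \<Rightarrow> 'y measure \<Rightarrow> ('y \<Rightarrow> real)
    \<Rightarrow> (real^'d \<Rightarrow> 'y \<Rightarrow> real^'d^'d) \<Rightarrow> (real^'d \<Rightarrow> 'y \<Rightarrow> real) set" where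
  "X_weighted D \<Gamma> w K = {v. \<exists>G. X_grad_ok D \<Gamma> v G \<and>
      (\<integral>\<^sup>+ y. (\<integral>\<^sup>+ x. indicator D x * ennreal (w y * (G x y \<bullet> (K x y *v G x y))) \<partial>lborel) \<partial>\<Gamma>) < \<infinity>}"

end

theory Submission
  imports Defs "HOL-Computational_Algebra.Polynomial"
begin

definition smooth1 :: "(real \<Rightarrow> real) \<Rightarrow> bool" where
  "smooth1 r \<longleftrightarrow> (\<exists>F. F 0 = r \<and> (\<forall>n t. (F n has_real_derivative F (Suc n) t) (at t)))"

lemma poly_exp_tendsto: "((\<lambda>s. poly p s * exp (- s)) \<longlongrightarrow> (0::real)) at_top"
proof -
  have eq: "poly p s * exp (- s) = (\<Sum>i\<le>degree p. coeff p i * (s ^ i / exp s))" for s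
    by (simp add: poly_altdef sum_distrib_right exp_minus divide_inverse mult.assoc)
  have "((\<lambda>s. \<Sum>i\<le>degree p. coeff p i * (s ^ i / exp s)) \<longlongrightarrow> (\<Sum>i\<le>degree p. coeff p i * 0)) at_top"
    by (intro tendsto_sum tendsto_mult tendsto_const tendsto_power_div_exp_0)
  then show ?thesis by (simp add: eq)
qed

definition ee :: "real \<Rightarrow> real" where "ee t = (if t > 0 then exp (- 1 / t) else 0)"

fun PP :: "nat \<Rightarrow> real poly" where
  "PP 0 = 1" | "PP (Suc n) = [:0,0,1:] * (PP n - pderiv (PP n))"

definition EF :: "nat \<Rightarrow> real \<Rightarrow> real" where
  "EF n t = (if t > 0 then poly (PP n) (1 / t) * exp (- 1 / t) else 0)"

lemma EF_deriv_pos: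
  assumes "t > 0"
  shows "(EF n has_real_derivative EF (Suc n) t) (at t)"
proof -
  let ?g = "\<lambda>t. poly (PP n) (1 / t) * exp (- 1 / t)"
  have d1: "((\<lambda>t. 1 / t) has_real_derivative - 1 / t^2) (at t)"
    using assms by (auto intro!: derivative_eq_intros simp: power2_eq_square field_simps)
  have d2: "((\<lambda>t. poly (PP n) (1 / t)) has_real_derivative poly (pderiv (PP n)) (1/t) * (- 1 / t^2)) (at t)"
    using DERIV_chain2[OF poly_DERIV d1] by simp
  have d3: "((\<lambda>t. exp (- 1 / t)) has_real_derivative exp (- 1 / t) * (1 / t^2)) (at t)"
    using assms by (auto intro!: derivative_eq_intros simp: power2_eq_square field_simps)
  have "(?g has_real_derivative
      poly (pderiv (PP n)) (1/t) * (- 1 / t^2) * exp (- 1 / t) + exp (- 1 / t) * (1 / t^2) * poly (PP n) (1 / t)) (at t)"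
    by (rule DERIV_mult[OF d2 d3])
  moreover have "poly (pderiv (PP n)) (1/t) * (- 1 / t^2) * exp (- 1 / t) + exp (- 1 / t) * (1 / t^2) * poly (PP n) (1 / t)
      = EF (Suc n) t"
    using assms by (simp add: EF_def algebra_simps power2_eq_square)
  ultimately have "(?g has_real_derivative EF (Suc n) t) (at t)" by simp
  then show ?thesis
    by (rule has_field_derivative_transform_within_open[where S="{0<..}"]) (use assms in \<open>auto simp: EF_def\<close>)
qed

lemma EF_deriv_neg:
  assumes "t < 0"
  shows "(EF n has_real_derivative EF (Suc n) t) (at t)"
proof -
  have "((\<lambda>_. 0::real) has_real_derivative 0) (at t)" by simp
  then have "(EF n has_real_derivative 0) (at t)"
  proof (rule has_field_derivative_transform_within_open[where S="{..<0}"])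
    show "t \<in> {..<0}" using assms by simp
  qed (auto simp: EF_def)
  then show ?thesis using assms by (simp add: EF_def)
qed

lemma EF_deriv_0: "(EF n has_real_derivative EF (Suc n) 0) (at 0)"
proof -
  have "((\<lambda>h. (EF n (0 + h) - EF n 0) / h) \<longlongrightarrow> 0) (at_left 0)"
  proof (rule Lim_transform_eventually[OF tendsto_const])
    show "\<forall>\<^sub>F h in at_left 0. 0 = (EF n (0 + h) - EF n 0) / h"
      unfolding eventually_at_left_field by (auto intro!: exI[of _ "-1"] simp: EF_def)
  qed
  moreover have "((\<lambda>h. (EF n (0 + h) - EF n 0) / h) \<longlongrightarrow> 0) (at_right 0)"
  proof -
    have "((\<lambda>s. poly (pCons 0 (PP n)) s * exp (- s)) \<longlongrightarrow> (0::real)) at_top"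
      by (rule poly_exp_tendsto)
    then have "((\<lambda>h. poly (pCons 0 (PP n)) (inverse h) * exp (- inverse h)) \<longlongrightarrow> (0::real)) (at_right 0)"
      by (rule filterlim_compose[OF _ filterlim_inverse_at_top_right])
    then show ?thesis
    proof (rule Lim_transform_eventually)
      show "\<forall>\<^sub>F h in at_right 0. poly (pCons 0 (PP n)) (inverse h) * exp (- inverse h) = (EF n (0 + h) - EF n 0) / h"
        unfolding eventually_at_right_field
        by (auto intro!: exI[of _ 1] simp: EF_def field_simps)
    qed
  qed
  ultimately have "((\<lambda>h. (EF n (0 + h) - EF n 0) / h) \<longlongrightarrow> 0) (at 0)"
    by (rule filterlim_split_at)
  then show ?thesis by (simp add: DERIV_def EF_def)
qed

lemma EF_deriv: "(EF n has_real_derivative EF (Suc n) t) (at t)"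
proof (cases t "0::real" rule: linorder_cases)
  case less then show ?thesis by (rule EF_deriv_neg)
next
  case equal then show ?thesis using EF_deriv_0 by simp
next
  case greater then show ?thesis by (rule EF_deriv_pos)
qed

lemma smooth1_ee: "smooth1 ee"
  unfolding smooth1_def
  by (intro exI[of _ EF] conjI allI EF_deriv) (auto simp: EF_def ee_def fun_eq_iff)

lemma smooth1_affine: "smooth1 r \<Longrightarrow> smooth1 (\<lambda>t. r (c * t + d))"
proof -
  assume "smooth1 r"
  then obtain F where F: "F 0 = r" "\<And>n t. (F n has_real_derivative F (Suc n) t) (at t)"
    unfolding smooth1_def by blast
  show ?thesis unfolding smooth1_def
  proof (intro exI[of _ "\<lambda>n t. c ^ n * F n (c * t + d)"] conjI allI)
    fix n t
    have "((\<lambda>t. c * t + d) has_real_derivative c) (at t)"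
      by (auto intro!: derivative_eq_intros)
    from DERIV_chain2[OF F(2) this]
    have "((\<lambda>t. F n (c * t + d)) has_real_derivative F (Suc n) (c * t + d) * c) (at t)" .
    then show "((\<lambda>t. c ^ n * F n (c * t + d)) has_real_derivative c ^ Suc n * F (Suc n) (c * t + d)) (at t)"
      using DERIV_cmult by (fastforce simp: algebra_simps)
  qed (simp add: F)
qed

lemma smooth1_deriv: "smooth1 r \<Longrightarrow> \<exists>r'. smooth1 r' \<and> (\<forall>t. (r has_real_derivative r' t) (at t))"
proof -
  assume "smooth1 r"
  then obtain F where F: "F 0 = r" "\<And>n t. (F n has_real_derivative F (Suc n) t) (at t)"
    unfolding smooth1_def by blast
  show ?thesis
    using F(2)[of 0] unfolding F(1)[symmetric]
    by (intro exI[of _ "F 1"]) (auto simp: smooth1_def intro!: exI[of _ "\<lambda>n. F (Suc n)"] F(2))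
qed

inductive TT :: "(real^'d::finite \<Rightarrow> real) \<Rightarrow> bool" where
  coord: "smooth1 r \<Longrightarrow> TT (\<lambda>x. r (x $ j))"
| const: "TT (\<lambda>x. c)"
| add: "TT f \<Longrightarrow> TT g \<Longrightarrow> TT (\<lambda>x. f x + g x)"
| mult: "TT f \<Longrightarrow> TT g \<Longrightarrow> TT (\<lambda>x. f x * g x)"

lemma TT_deriv:
  "TT f \<Longrightarrow> \<exists>D. (\<forall>x. (f has_derivative D x) (at x)) \<and> (\<forall>i. TT (\<lambda>x. D x (axis i 1)))"
proof (induction rule: TT.induct)
  case (coord r j)
  then obtain r' where r': "smooth1 r'" "\<And>t. (r has_real_derivative r' t) (at t)"
    using smooth1_deriv by blast
  have "((\<lambda>x. r (x $ j)) has_derivative (\<lambda>h. r' (x $ j) * (h $ j))) (at x)" for x :: "real^'a"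
  proof -
    have "((\<lambda>x. x $ j) has_derivative (\<lambda>h. h $ j)) (at x)"
      by (rule bounded_linear_imp_has_derivative) (rule bounded_linear_vec_nth)
    moreover have "(r has_derivative (\<lambda>h. r' (x $ j) * h)) (at (x $ j))"
      using r'(2) by (simp add: has_field_derivative_def)
    ultimately show ?thesis by (rule has_derivative_compose)
  qed
  moreover have "TT (\<lambda>x. r' (x $ j) * (axis i 1 $ j))" for i
    by (rule TT.mult[OF TT.coord[OF r'(1)] TT.const])
  ultimately show ?case
    by (intro exI[of _ "\<lambda>x h. r' (x $ j) * (h $ j)"]) auto
next
  case (const c)
  show ?case by (rule exI[of _ "\<lambda>x h. 0"]) (auto intro: TT.const)
next
  case (add f g)
  then obtain Df Dg where f: "\<And>x. (f has_derivative Df x) (at x)" "\<And>i. TT (\<lambda>x. Df x (axis i 1))"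
    and g: "\<And>x. (g has_derivative Dg x) (at x)" "\<And>i. TT (\<lambda>x. Dg x (axis i 1))" by blast
  show ?case
    by (rule exI[of _ "\<lambda>x h. Df x h + Dg x h"]) (auto intro!: has_derivative_add f g TT.add)
next
  case (mult f g)
  then obtain Df Dg where f: "\<And>x. (f has_derivative Df x) (at x)" "\<And>i. TT (\<lambda>x. Df x (axis i 1))"
    and g: "\<And>x. (g has_derivative Dg x) (at x)" "\<And>i. TT (\<lambda>x. Dg x (axis i 1))" by blast
  show ?case
    by (rule exI[of _ "\<lambda>x h. f x * Dg x h + Df x h * g x"])
      (auto intro!: has_derivative_mult f g TT.add TT.mult mult.hyps)
qed

lemma TT_partial: "TT f \<Longrightarrow> TT (partial i f)"
proof -
  assume "TT f"
  then obtain D where D: "\<And>x. (f has_derivative D x) (at x)" "\<And>i. TT (\<lambda>x. D x (axis i 1))"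
    using TT_deriv by blast
  have "partial i f = (\<lambda>x. D x (axis i 1))"
    unfolding partial_def fun_eq_iff using frechet_derivative_at[OF D(1)] by simp
  then show ?thesis using D(2) by simp
qed

lemma TT_differentiable: "TT f \<Longrightarrow> f differentiable_on S"
  using TT_deriv unfolding differentiable_on_def differentiable_def
  by (meson has_derivative_at_withinI)

lemma TT_iter: "TT f \<Longrightarrow> TT (iter_partial is f)"
  by (induction "is") (auto intro: TT_partial)

lemma TT_smooth: "TT f \<Longrightarrow> smooth_on S f"
  unfolding smooth_on_def using TT_iter TT_differentiable by blast

lemma TT_prod: "finite S \<Longrightarrow> (\<And>i. i \<in> S \<Longrightarrow> TT (f i)) \<Longrightarrow> TT (\<lambda>x. \<Prod>i\<in>S. f i x)"
proof (induction S rule: finite_induct)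
  case empty then show ?case by (simp add: TT.const)
next
  case (insert a S)
  then show ?case by (simp add: TT.mult)
qed

lemma TT_ee: "TT (\<lambda>x. ee (c * (x $ j) + d))"
  using TT.coord[OF smooth1_affine[OF smooth1_ee, of c d]] .

lemma ee_pos_iff: "ee t \<noteq> 0 \<longleftrightarrow> t > 0"
  by (simp add: ee_def)

lemma ee_bounds: "0 \<le> ee t" "ee t \<le> 1"
  by (auto simp: ee_def)

definition bump :: "nat \<Rightarrow> real^'d::finite \<Rightarrow> real^'d \<Rightarrow> real^'d \<Rightarrow> real" where
  "bump n a b x = (\<Prod>i\<in>UNIV. ee (real (Suc n) * (x $ i) + (- real (Suc n) * a $ i))
                           * ee ((- real (Suc n)) * (x $ i) + real (Suc n) * b $ i))"

lemma bump_TT: "TT (bump n a b)"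
  unfolding bump_def by (intro TT_prod TT.mult TT_ee) auto

lemma bump_nonzero: "bump n a b x \<noteq> 0 \<longleftrightarrow> x \<in> box a b"
proof -
  have k: "real (Suc n) > 0" by simp
  have "bump n a b x \<noteq> 0 \<longleftrightarrow> (\<forall>i. real (Suc n) * (x $ i) + (- real (Suc n) * a $ i) > 0
       \<and> (- real (Suc n)) * (x $ i) + real (Suc n) * b $ i > 0)"
    unfolding bump_def by (simp add: ee_pos_iff)
  also have "\<dots> \<longleftrightarrow> (\<forall>i. a $ i < x $ i \<and> x $ i < b $ i)"
  proof -
    have "real (Suc n) * (x $ i) + (- real (Suc n) * a $ i) = real (Suc n) * (x $ i - a $ i)" for i
      by (simp add: algebra_simps)
    then have "real (Suc n) * (x $ i) + (- real (Suc n) * a $ i) > 0 \<longleftrightarrow> a $ i < x $ i" for i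
      using k by (simp add: zero_less_mult_iff)
    moreover have "(- real (Suc n)) * (x $ i) + real (Suc n) * b $ i = real (Suc n) * (b $ i - x $ i)" for i
      by (simp add: algebra_simps)
    then have "(- real (Suc n)) * (x $ i) + real (Suc n) * b $ i > 0 \<longleftrightarrow> x $ i < b $ i" for i
      using k by (simp add: zero_less_mult_iff)
    ultimately show ?thesis by simp
  qed
  finally show ?thesis by (simp add: mem_box_cart)
qed

lemma bump_bounds: "0 \<le> bump n a b x" "bump n a b x \<le> 1"
  unfolding bump_def
   apply (rule prod_nonneg, rule mult_nonneg_nonneg, rule ee_bounds, rule ee_bounds)
  apply (rule prod_le_1, rule conjI, rule mult_nonneg_nonneg, rule ee_bounds, rule ee_bounds)
  apply (rule mult_le_one, rule ee_bounds, rule ee_bounds, rule ee_bounds)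
  done

lemma bump_lim:
  fixes a b x :: "real^'d::finite"
  shows "(\<lambda>n. bump n a b x) \<longlonglongrightarrow> indicator (box a b) x"
proof (cases "x \<in> box a b")
  case True
  then have ab: "a $ i < x $ i" "x $ i < b $ i" for i by (auto simp: mem_box_cart)
  have lim1: "(\<lambda>n. ee (real (Suc n) * c)) \<longlonglongrightarrow> 1" if c: "c > 0" for c :: real
  proof -
    have "(\<lambda>n. exp (- (inverse (real (Suc n)) * inverse c))) \<longlonglongrightarrow> exp (- (0 * inverse c))"
      by (intro tendsto_exp tendsto_minus tendsto_mult tendsto_const LIMSEQ_inverse_real_of_nat)
    moreover have "ee (real (Suc n) * c) = exp (- (inverse (real (Suc n)) * inverse c))" for n
    proof -
      have pos: "real (Suc n) * c > 0" using c by simp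
      have "- 1 / (real (Suc n) * c) = - (inverse (real (Suc n)) * inverse c)"
        by (simp add: divide_inverse inverse_mult_distrib)
      then show ?thesis using pos by (simp add: ee_def)
    qed
    ultimately show ?thesis by simp
  qed
  have f1: "(\<lambda>n. ee (real (Suc n) * x $ i + - real (Suc n) * a $ i)) \<longlonglongrightarrow> 1" for i
  proof -
    have "real (Suc n) * x $ i + - real (Suc n) * a $ i = real (Suc n) * (x $ i - a $ i)" for n
      by (simp add: algebra_simps)
    then show ?thesis using lim1[of "x $ i - a $ i"] ab[of i] by simp
  qed
  have f2: "(\<lambda>n. ee (- real (Suc n) * x $ i + real (Suc n) * b $ i)) \<longlonglongrightarrow> 1" for i
  proof -
    have "- real (Suc n) * x $ i + real (Suc n) * b $ i = real (Suc n) * (b $ i - x $ i)" for n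
      by (simp add: algebra_simps)
    then show ?thesis using lim1[of "b $ i - x $ i"] ab[of i] by simp
  qed
  have fi: "(\<lambda>n. ee (real (Suc n) * x $ i + - real (Suc n) * a $ i) * ee (- real (Suc n) * x $ i + real (Suc n) * b $ i)) \<longlonglongrightarrow> 1 * 1" for i
    by (rule tendsto_mult[OF f1 f2])
  have "(\<lambda>n. bump n a b x) \<longlonglongrightarrow> (\<Prod>i\<in>(UNIV::'d set). 1 * 1)"
    unfolding bump_def by (rule tendsto_prod) (rule fi)
  then show ?thesis using True by simp
next
  case False
  then have "bump n a b x = 0" for n using bump_nonzero by blast
  then show ?thesis using False by simp
qed

lemma bump_test_fun:
  assumes "cbox a b \<subseteq> D"
  shows "test_fun D (bump n a b)"
proof -
  have eq: "{x. bump n a b x \<noteq> 0} = box a b" using bump_nonzero by blast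
  have "closure (box a b) \<subseteq> cbox a b"
    by (rule closure_minimal[OF box_subset_cbox closed_cbox])
  then show ?thesis
    unfolding test_fun_def eq using assms
    by (auto intro!: TT_smooth bump_TT compact_closure[THEN iffD2] bounded_box)
qed

lemma bump_cont: "continuous_on UNIV (bump n a b)"
  using TT_differentiable[OF bump_TT] differentiable_imp_continuous_on by blast

lemma bump_meas[measurable]: "bump n a b \<in> borel_measurable borel"
  by (rule borel_measurable_continuous_onI[OF bump_cont])

lemma FL_box:
  fixes h :: "real^'d::finite \<Rightarrow> real"
  assumes loc: "\<And>K. compact K \<Longrightarrow> K \<subseteq> D \<Longrightarrow> set_integrable lborel K h"
    and orth: "\<And>\<phi>. test_fun D \<phi> \<Longrightarrow> (LINT x:D|lborel. h x * \<phi> x) = 0"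
    and ab: "cbox a b \<subseteq> D"
  shows "(LINT x:box a b|lborel. h x) = 0"
proof -
  have int: "integrable lborel (\<lambda>x. indicator (cbox a b) x * h x)"
    using loc[OF compact_cbox ab] by (simp add: set_integrable_def)
  have hm: "(\<lambda>x. indicator (cbox a b) x * h x) \<in> borel_measurable lborel"
    using int by auto
  define s where "s n x = indicator (cbox a b) x * h x * bump n a b x" for n x
  have s_eq: "integral\<^sup>L lborel (s n) = 0" for n
  proof -
    have "indicator D x *\<^sub>R (h x * bump n a b x) = s n x" for x
    proof (cases "x \<in> box a b")
      case True
      then have xc: "x \<in> cbox a b" using box_subset_cbox by blast
      then have "x \<in> D" using ab by blast
      then show ?thesis using xc by (simp add: s_def)
    next
      case False
      then show ?thesis using bump_nonzero[of n a b x] by (auto simp: s_def)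
    qed
    then have "(LINT x:D|lborel. h x * bump n a b x) = integral\<^sup>L lborel (s n)"
      by (simp add: set_lebesgue_integral_def)
    then show ?thesis using orth[OF bump_test_fun[OF ab]] by simp
  qed
  have "(\<lambda>n. integral\<^sup>L lborel (s n)) \<longlonglongrightarrow> integral\<^sup>L lborel (\<lambda>x. indicator (box a b) x * h x)"
  proof (rule integral_dominated_convergence[where w="\<lambda>x. norm (indicator (cbox a b) x * h x)"])
    show "(\<lambda>x. indicator (box a b) x * h x) \<in> borel_measurable lborel"
    proof -
      have "(\<lambda>x. indicator (box a b) x * (indicator (cbox a b) x * h x)) \<in> borel_measurable lborel"
        by (intro borel_measurable_times hm borel_measurable_indicator) simp
      moreover have "indicator (box a b) x * (indicator (cbox a b) x * h x) = indicator (box a b) x * h x" for x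
        using box_subset_cbox[of a b] by (auto simp: indicator_def)
      ultimately show ?thesis by simp
    qed
    show "s n \<in> borel_measurable lborel" for n
      unfolding s_def using hm
      by (intro borel_measurable_times hm) (auto simp: measurable_lborel1)
    show "integrable lborel (\<lambda>x. norm (indicator (cbox a b) x * h x))"
      using int by (rule integrable_norm)
    show "AE x in lborel. (\<lambda>n. s n x) \<longlonglongrightarrow> indicator (box a b) x * h x"
    proof (rule AE_I2)
      fix x
      have "(\<lambda>n. indicator (cbox a b) x * h x * bump n a b x) \<longlonglongrightarrow> indicator (cbox a b) x * h x * indicator (box a b) x"
        by (intro tendsto_mult tendsto_const bump_lim)
      moreover have "indicator (cbox a b) x * h x * indicator (box a b) x = indicator (box a b) x * h x"
        using box_subset_cbox[of a b] by (auto simp: indicator_def)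
      ultimately show "(\<lambda>n. s n x) \<longlonglongrightarrow> indicator (box a b) x * h x" by (simp add: s_def)
    qed
    show "AE x in lborel. norm (s n x) \<le> norm (indicator (cbox a b) x * h x)" for n
    proof (rule AE_I2)
      fix x
      have "\<bar>indicator (cbox a b) x * h x\<bar> * \<bar>bump n a b x\<bar> \<le> \<bar>indicator (cbox a b) x * h x\<bar> * 1"
        using bump_bounds[of n a b x] by (intro mult_left_mono) auto
      then show "norm (s n x) \<le> norm (indicator (cbox a b) x * h x)"
        by (simp add: s_def abs_mult)
    qed
  qed
  then have "integral\<^sup>L lborel (\<lambda>x. indicator (box a b) x * h x) = 0"
  proof -
    have "(\<lambda>n. integral\<^sup>L lborel (s n)) = (\<lambda>n. 0)" using s_eq by simp
    then show ?thesis using LIMSEQ_unique[OF _ tendsto_const] \<open>(\<lambda>n. integral\<^sup>L lborel (s n)) \<longlonglongrightarrow> _\<close> by metis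
  qed
  then show ?thesis by (simp add: set_lebesgue_integral_def)
qed

lemma nn_fin_of_integrable:
  fixes g :: "_ \<Rightarrow> real"
  assumes "integrable M g"
  shows "(\<integral>\<^sup>+x. ennreal (g x) \<partial>M) < \<top>"
  using integrableD(2)[OF assms] by (simp add: less_top infinity_ennreal_def)

lemma nn_eq_of_int0:
  fixes g :: "_ \<Rightarrow> real"
  assumes "integrable M g" "integral\<^sup>L M g = 0"
  shows "(\<integral>\<^sup>+x. ennreal (g x) \<partial>M) = (\<integral>\<^sup>+x. ennreal (- g x) \<partial>M)"
proof -
  have g2: "integrable M (\<lambda>x. - g x)" using assms(1) by simp
  have f1: "(\<integral>\<^sup>+x. ennreal (g x) \<partial>M) < \<top>" by (rule nn_fin_of_integrable[OF assms(1)])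
  have f2: "(\<integral>\<^sup>+x. ennreal (- g x) \<partial>M) < \<top>" by (rule nn_fin_of_integrable[OF g2])
  from real_lebesgue_integral_def[OF assms(1)] assms(2)
  have "enn2real (\<integral>\<^sup>+x. ennreal (g x) \<partial>M) = enn2real (\<integral>\<^sup>+x. ennreal (- g x) \<partial>M)" by simp
  then have "ennreal (enn2real (\<integral>\<^sup>+x. ennreal (g x) \<partial>M)) = ennreal (enn2real (\<integral>\<^sup>+x. ennreal (- g x) \<partial>M))"
    by simp
  then show ?thesis using ennreal_enn2real[OF f1] ennreal_enn2real[OF f2] by metis
qed

lemma int0_of_nn_eq:
  fixes g :: "_ \<Rightarrow> real"
  assumes "integrable M g" "(\<integral>\<^sup>+x. ennreal (g x) \<partial>M) = (\<integral>\<^sup>+x. ennreal (- g x) \<partial>M)"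
  shows "integral\<^sup>L M g = 0"
  using real_lebesgue_integral_def[OF assms(1)] assms(2) by simp

lemma FL_cbox:
  fixes h :: "real^'d::finite \<Rightarrow> real"
  assumes loc: "\<And>K. compact K \<Longrightarrow> K \<subseteq> D \<Longrightarrow> set_integrable lborel K h"
    and orth: "\<And>\<phi>. test_fun D \<phi> \<Longrightarrow> (LINT x:D|lborel. h x * \<phi> x) = 0"
    and uv: "cbox u v \<subseteq> D"
  shows "AE x in lborel. x \<in> cbox u v \<longrightarrow> h x = 0"
proof -
  define f where "f x = indicator (cbox u v) x * h x" for x
  have fint: "integrable lborel f"
    unfolding f_def using loc[OF compact_cbox uv] by (simp add: set_integrable_def)
  then have fm[measurable]: "f \<in> borel_measurable lborel" by auto
  have fm': "f \<in> borel_measurable borel" using fm by simp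
  have null: "cbox u v - box u v \<in> null_sets lborel"
  proof -
    have "emeasure lborel (cbox u v - box u v) = emeasure lborel (cbox u v) - emeasure lborel (box u v)"
      using emeasure_lborel_box_finite[of u v]
      by (intro emeasure_Diff) (auto simp: box_subset_cbox infinity_ennreal_def)
    also have "\<dots> = 0" by (simp add: emeasure_lborel_cbox_eq emeasure_lborel_box_eq)
    finally show ?thesis by (auto simp: null_sets_def)
  qed
  have box0: "integral\<^sup>L lborel (\<lambda>x. indicator (box a b) x * f x) = 0" for a b
  proof -
    define p where "p = (\<chi> i. max (a $ i) (u $ i))"
    define q where "q = (\<chi> i. min (b $ i) (v $ i))"
    have pq: "cbox p q \<subseteq> D"
      using uv by (auto simp: p_def q_def mem_box_cart)
    have pqs: "box p q \<subseteq> cbox u v"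
      by (auto simp: p_def q_def mem_box_cart less_imp_le)
    have "AE x in lborel. indicator (box a b) x * f x = indicator (box p q) x * f x"
    proof (rule AE_I')
      show "cbox u v - box u v \<in> null_sets lborel" by (rule null)
      show "{x \<in> space lborel. \<not> indicator (box a b) x * f x = indicator (box p q) x * f x}
          \<subseteq> cbox u v - box u v"
        by (auto simp: f_def p_def q_def indicator_def mem_box_cart)
    qed
    then have "integral\<^sup>L lborel (\<lambda>x. indicator (box a b) x * f x) = integral\<^sup>L lborel (\<lambda>x. indicator (box p q) x * f x)"
      by (intro integral_cong_AE) auto
    also have "\<dots> = integral\<^sup>L lborel (\<lambda>x. indicator (box p q) x * h x)"
      using pqs by (intro Bochner_Integration.integral_cong) (auto simp: f_def indicator_def)
    also have "\<dots> = (LINT x:box p q|lborel. h x)" by (simp add: set_lebesgue_integral_def)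
    also have "\<dots> = 0" by (rule FL_box[OF loc orth pq])
    finally show ?thesis .
  qed
  define M1 where "M1 = density lborel (\<lambda>x. ennreal (f x))"
  define M2 where "M2 = density lborel (\<lambda>x. ennreal (- f x))"
  define E where "E = range (\<lambda>(a,b). box a b :: (real^'d) set)"
  have inE: "box a b \<in> E" for a b unfolding E_def by (rule image_eqI[where x="(a,b)"]) auto
  have em1: "emeasure M1 A = (\<integral>\<^sup>+x. ennreal (indicator A x * f x) \<partial>lborel)" if "A \<in> sets borel" for A
    unfolding M1_def using that
    by (subst emeasure_density) (auto intro!: nn_integral_cong simp: indicator_def)
  have em2: "emeasure M2 A = (\<integral>\<^sup>+x. ennreal (- (indicator A x * f x)) \<partial>lborel)" if "A \<in> sets borel" for A
    unfolding M2_def using that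
    by (subst emeasure_density) (auto intro!: nn_integral_cong simp: indicator_def)
  have intA: "integrable lborel (\<lambda>x. indicator A x * f x)" if "A \<in> sets borel" for A
    using integrable_real_mult_indicator[of A lborel f] fint that by (simp add: mult.commute)
  have sb: "sets (borel::(real^'d) measure) = sigma_sets UNIV E"
    unfolding E_def by (subst borel_eq_box) (rule sets_measure_of, simp)
  have "M1 = M2"
  proof (rule measure_eqI_generator_eq[where E=E and \<Omega>=UNIV and A="\<lambda>n. box (- (\<chi> i. real n)) (\<chi> i. real n)"])
    show "Int_stable E"
    proof (rule Int_stableI)
      fix X Y assume "X \<in> E" "Y \<in> E"
      then obtain a b c d where "X = box a b" "Y = box c d" by (auto simp: E_def)
      then show "X \<inter> Y \<in> E" by (simp add: box_Int_box inE)
    qed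
    show "E \<subseteq> Pow UNIV" by simp
    show "emeasure M1 X = emeasure M2 X" if "X \<in> E" for X
    proof -
      obtain a b where X: "X = box a b" using \<open>X \<in> E\<close> by (auto simp: E_def)
      show ?thesis unfolding X em1[OF borel_open[OF open_box]] em2[OF borel_open[OF open_box]]
        by (rule nn_eq_of_int0[OF intA[OF borel_open[OF open_box]] box0])
    qed
    show "sets M1 = sigma_sets UNIV E" unfolding M1_def using sb by simp
    show "sets M2 = sigma_sets UNIV E" unfolding M2_def using sb by simp
    show "range (\<lambda>n. box (- (\<chi> i. real n)) (\<chi> i. real n)) \<subseteq> E" using inE by auto
    show "(\<Union>n. box (- (\<chi> i. real n)) (\<chi> i. real n :: real^'d)) = UNIV"
    proof (intro set_eqI iffI UNIV_I)
      fix x :: "real^'d"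
      obtain n :: nat where n: "norm x < real n" using reals_Archimedean2 by blast
      have "\<bar>x $ i\<bar> < real n" for i using component_le_norm_cart[of x i] n by linarith
      then have "x \<in> box (- (\<chi> i. real n)) (\<chi> i. real n)"
        by (auto simp: mem_box_cart abs_less_iff) (metis minus_less_iff)
      then show "x \<in> (\<Union>n. box (- (\<chi> i. real n)) (\<chi> i. real n))" by blast
    qed
    show "emeasure M1 (box (- (\<chi> i. real n)) (\<chi> i. real n)) \<noteq> \<infinity>" for n
    proof -
      have "emeasure M1 (box (- (\<chi> i. real n)) (\<chi> i. real n)) \<le> emeasure M1 (space M1)"
        by (rule emeasure_space)
      also have "\<dots> = (\<integral>\<^sup>+x. ennreal (f x) \<partial>lborel)"
        unfolding M1_def by (simp add: emeasure_density)
      also have "\<dots> < \<top>" by (rule nn_fin_of_integrable[OF fint])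
      finally show ?thesis by (simp add: infinity_ennreal_def)
    qed
  qed
  have "AE x in lborel. f x = 0"
  proof (rule density_unique_real[where f'="\<lambda>_. 0"])
    show "integrable lborel f" by (rule fint)
    show "integrable lborel (\<lambda>_. 0::real)" by simp
    fix A :: "(real^'d) set" assume A: "A \<in> sets lborel"
    then have Ab: "A \<in> sets borel" by simp
    have "integral\<^sup>L lborel (\<lambda>x. indicator A x * f x) = 0"
      by (rule int0_of_nn_eq[OF intA[OF Ab]]) (use \<open>M1 = M2\<close> em1[OF Ab] em2[OF Ab] in simp)
    then show "(LINT x:A|lborel. f x) = (LINT x:A|lborel. 0)"
      by (simp add: set_lebesgue_integral_def)
  qed
  then show ?thesis by eventually_elim (auto simp: f_def)
qed

lemma FL_open:
  fixes h :: "real^'d::finite \<Rightarrow> real"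
  assumes D: "open D"
    and loc: "\<And>K. compact K \<Longrightarrow> K \<subseteq> D \<Longrightarrow> set_integrable lborel K h"
    and orth: "\<And>\<phi>. test_fun D \<phi> \<Longrightarrow> (LINT x:D|lborel. h x * \<phi> x) = 0"
  shows "AE x in lborel. x \<in> D \<longrightarrow> h x = 0"
proof -
  obtain \<D> where cnt: "countable \<D>" and sub: "\<D> \<subseteq> Pow D"
    and cb: "\<And>X. X \<in> \<D> \<Longrightarrow> \<exists>a b. X = cbox a b" and un: "\<Union>\<D> = D"
    using open_countable_Union_open_cbox[OF D] by metis
  have "AE x in lborel. \<forall>X\<in>\<D>. x \<in> X \<longrightarrow> h x = 0"
  proof (rule AE_ball_countable'[OF _ cnt])
    fix X assume X: "X \<in> \<D>"
    then obtain a b where "X = cbox a b" using cb by blast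
    moreover have "X \<subseteq> D" using X sub by blast
    ultimately show "AE x in lborel. x \<in> X \<longrightarrow> h x = 0"
      using FL_cbox[OF loc orth] by blast
  qed
  then show ?thesis by (rule AE_mp) (use un in \<open>auto intro!: AE_I2\<close>)
qed

lemma test_fun_cont: "test_fun D \<phi> \<Longrightarrow> continuous_on UNIV \<phi>"
  unfolding test_fun_def smooth_on_def
  using differentiable_imp_continuous_on iter_partial.simps(1) by metis

lemma test_fun_integrable:
  fixes g :: "real^'d::finite \<Rightarrow> real"
  assumes loc: "\<And>K. compact K \<Longrightarrow> K \<subseteq> D \<Longrightarrow> set_integrable lborel K g"
    and \<phi>: "test_fun D \<phi>"
  shows "set_integrable lborel D (\<lambda>x. g x * \<phi> x)"
proof -
  define S where "S = closure {x. \<phi> x \<noteq> 0}"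
  have S: "compact S" "S \<subseteq> D" using \<phi> by (auto simp: test_fun_def S_def)
  have cont: "continuous_on UNIV \<phi>" by (rule test_fun_cont[OF \<phi>])
  have "compact (\<phi> ` S)"
    by (rule compact_continuous_image[OF continuous_on_subset[OF cont subset_UNIV] S(1)])
  then have "bounded (\<phi> ` S)" by (rule compact_imp_bounded)
  then obtain B where "\<forall>y\<in>\<phi> ` S. norm y \<le> B" unfolding bounded_iff by blast
  then have B: "\<And>x. x \<in> S \<Longrightarrow> norm (\<phi> x) \<le> B" by blast
  have gi: "integrable lborel (\<lambda>x. indicator S x * g x)"
    using loc[OF S] by (simp add: set_integrable_def)
  have eq: "indicator D x * (g x * \<phi> x) = indicator S x * g x * \<phi> x" for x
  proof (cases "\<phi> x = 0")
    case False
    then have "x \<in> {x. \<phi> x \<noteq> 0}" by simp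
    then have xS: "x \<in> S" unfolding S_def by (rule closure_subset[THEN subsetD])
    have "x \<in> D" using S(2) xS by (rule subsetD)
    then show ?thesis using xS by simp
  next
    case True
    then show ?thesis by simp
  qed
  have pm: "\<phi> \<in> borel_measurable lborel"
    using borel_measurable_continuous_onI[OF cont] by (simp add: measurable_lborel1)
  show ?thesis unfolding set_integrable_def
  proof (rule Bochner_Integration.integrable_bound[where f="\<lambda>x. indicator S x * g x * B"])
    show "integrable lborel (\<lambda>x. indicator S x * g x * B)" using gi by simp
    have m1: "(\<lambda>x. indicator S x * g x) \<in> borel_measurable lborel" using gi by auto
    have "(\<lambda>x. indicator S x * g x * \<phi> x) \<in> borel_measurable lborel"
      using borel_measurable_times[OF m1 pm] .
    moreover have "(\<lambda>x. indicator D x *\<^sub>R (g x * \<phi> x)) = (\<lambda>x. indicator S x * g x * \<phi> x)"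
      by (rule ext) (simp only: real_scaleR_def eq)
    ultimately show "(\<lambda>x. indicator D x *\<^sub>R (g x * \<phi> x)) \<in> borel_measurable lborel"
      by simp
    show "AE x in lborel. norm (indicator D x *\<^sub>R (g x * \<phi> x)) \<le> norm (indicator S x * g x * B)"
    proof (rule AE_I2)
      fix x
      show "norm (indicator D x *\<^sub>R (g x * \<phi> x)) \<le> norm (indicator S x * g x * B)"
      proof (cases "x \<in> S")
        case True
        then have "\<bar>\<phi> x\<bar> \<le> B" using B by simp
        then have "\<bar>g x\<bar> * \<bar>\<phi> x\<bar> \<le> \<bar>g x\<bar> * \<bar>B\<bar>" by (intro mult_left_mono) auto
        moreover have "x \<in> D" using S(2) True by (rule subsetD)
        ultimately show ?thesis using True by (simp add: abs_mult)
      next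
        case False
        then show ?thesis using eq[of x] by simp
      qed
    qed
  qed
qed

lemma weak_grad_comp_loc:
  assumes "is_weak_grad D v g" "compact K" "K \<subseteq> D"
  shows "set_integrable lborel K (\<lambda>x. g x $ i)"
proof -
  have "integrable lborel (\<lambda>x. indicator K x *\<^sub>R g x)"
    using assms unfolding is_weak_grad_def set_integrable_def by blast
  then have "integrable lborel (\<lambda>x. (indicator K x *\<^sub>R g x) \<bullet> axis i 1)"
    by (rule integrable_inner_left)
  then show ?thesis unfolding set_integrable_def by (simp add: inner_axis)
qed

lemma weak_grad_unique:
  fixes D :: "(real^'d::finite) set"
  assumes D: "open D" and g1: "is_weak_grad D v g1" and g2: "is_weak_grad D v g2"
  shows "AE x in lborel. x \<in> D \<longrightarrow> g1 x = g2 x"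
proof -
  have comp: "AE x in lborel. x \<in> D \<longrightarrow> g1 x $ i - g2 x $ i = 0" for i
  proof (rule FL_open[OF D])
    fix K :: "(real^'d) set" assume K: "compact K" "K \<subseteq> D"
    show "set_integrable lborel K (\<lambda>x. g1 x $ i - g2 x $ i)"
      using weak_grad_comp_loc[OF g1 K] weak_grad_comp_loc[OF g2 K] by (rule set_integral_diff(1))
  next
    fix \<phi> assume \<phi>: "test_fun D \<phi>"
    have i1: "set_integrable lborel D (\<lambda>x. g1 x $ i * \<phi> x)"
      by (rule test_fun_integrable[OF _ \<phi>]) (rule weak_grad_comp_loc[OF g1])
    have i2: "set_integrable lborel D (\<lambda>x. g2 x $ i * \<phi> x)"
      by (rule test_fun_integrable[OF _ \<phi>]) (rule weak_grad_comp_loc[OF g2])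
    have e1: "(LINT x:D|lborel. v x * partial i \<phi> x) = - (LINT x:D|lborel. g1 x $ i * \<phi> x)"
      using g1 \<phi> unfolding is_weak_grad_def by blast
    have e2: "(LINT x:D|lborel. v x * partial i \<phi> x) = - (LINT x:D|lborel. g2 x $ i * \<phi> x)"
      using g2 \<phi> unfolding is_weak_grad_def by blast
    have "(LINT x:D|lborel. (g1 x $ i - g2 x $ i) * \<phi> x)
        = (LINT x:D|lborel. g1 x $ i * \<phi> x - g2 x $ i * \<phi> x)"
      by (simp add: left_diff_distrib)
    also have "\<dots> = (LINT x:D|lborel. g1 x $ i * \<phi> x) - (LINT x:D|lborel. g2 x $ i * \<phi> x)"
      by (rule set_integral_diff(2)[OF i1 i2])
    also have "\<dots> = 0" using e1 e2 by simp
    finally show "(LINT x:D|lborel. (g1 x $ i - g2 x $ i) * \<phi> x) = 0" .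
  qed
  have "AE x in lborel. \<forall>i. x \<in> D \<longrightarrow> g1 x $ i - g2 x $ i = 0"
    by (subst AE_all_countable) (rule allI, rule comp)
  then show ?thesis by eventually_elim (auto simp: vec_eq_iff)
qed

lemma weak_grad_meas:
  fixes D :: "(real^'d::finite) set"
  assumes D: "open D" and g: "is_weak_grad D v g"
  shows "g \<in> borel_measurable (restrict_space lborel D)"
proof -
  obtain \<D> where cnt: "countable \<D>" and sub: "\<D> \<subseteq> Pow D"
    and cb: "\<And>X. X \<in> \<D> \<Longrightarrow> \<exists>a b. X = cbox a b" and un: "\<Union>\<D> = D"
    using open_countable_Union_open_cbox[OF D] by metis
  have Db: "D \<in> sets lborel" using D by simp
  show ?thesis
  proof (rule measurable_piecewise_restrict[OF cnt])
    fix X assume X: "X \<in> \<D>"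
    then obtain a b where Xab: "X = cbox a b" using cb by blast
    have XD: "X \<subseteq> D" using X sub by blast
    have Xb: "X \<in> sets lborel" using Xab by simp
    show "X \<inter> space (restrict_space lborel D) \<in> sets (restrict_space lborel D)"
      using XD Xb Db by (auto simp: sets_restrict_space_iff)
    have "set_integrable lborel X g"
      using g Xab XD unfolding is_weak_grad_def by auto
    then have "(\<lambda>x. indicator X x *\<^sub>R g x) \<in> borel_measurable lborel"
      by (auto simp: set_integrable_def)
    then have "g \<in> borel_measurable (restrict_space lborel X)"
      using Xb by (subst borel_measurable_restrict_space_iff) auto
    moreover have "restrict_space (restrict_space lborel D) X = restrict_space lborel X"
      using XD Xb Db by (subst restrict_restrict_space) (auto simp: Int_absorb1)
    ultimately show "g \<in> borel_measurable (restrict_space (restrict_space lborel D) X)" by simp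
  qed (use un in \<open>auto simp: space_restrict_space\<close>)
qed

lemma meas_vec_nth: "(\<lambda>v::'a::real_normed_vector^'n::finite. v $ i) \<in> borel_measurable borel"
  by (rule borel_measurable_continuous_onI) (rule linear_continuous_on[OF bounded_linear_vec_nth])

lemma meas_bilin:
  fixes A :: "'a \<Rightarrow> real^'d::finite^'d" and g1 g2 :: "'a \<Rightarrow> real^'d"
  assumes A: "A \<in> borel_measurable M" and g1: "g1 \<in> borel_measurable M" and g2: "g2 \<in> borel_measurable M"
  shows "(\<lambda>p. g1 p \<bullet> (A p *v g2 p)) \<in> borel_measurable M"
proof -
  have c1: "(\<lambda>p. g1 p $ i) \<in> borel_measurable M" for i using measurable_compose[OF g1 meas_vec_nth] .
  have c2: "(\<lambda>p. g2 p $ i) \<in> borel_measurable M" for i using measurable_compose[OF g2 meas_vec_nth] .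
  have cA1: "(\<lambda>p. A p $ i) \<in> borel_measurable M" for i using measurable_compose[OF A meas_vec_nth] .
  have cA: "(\<lambda>p. A p $ i $ j) \<in> borel_measurable M" for i j using measurable_compose[OF cA1 meas_vec_nth] .
  have eq: "g1 p \<bullet> (A p *v g2 p) = (\<Sum>i\<in>UNIV. g1 p $ i * (\<Sum>j\<in>UNIV. A p $ i $ j * g2 p $ j))" for p
    by (simp add: inner_vec_def matrix_vector_mult_def)
  show ?thesis unfolding eq
    by (intro borel_measurable_sum borel_measurable_times c1 c2 cA)
qed

lemma grad_zero: "grad (\<lambda>x::real^'d::finite. 0::real) x = 0"
proof -
  have "frechet_derivative (\<lambda>x::real^'d. 0::real) (at x) = (\<lambda>h. 0)"
    using frechet_derivative_at[OF has_derivative_const[of 0 "at x"]] by simp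
  then show ?thesis by (simp add: grad_def partial_def vec_eq_iff)
qed

lemma test_fun_zero: "test_fun D (\<lambda>x::real^'d::finite. 0::real)"
  unfolding test_fun_def by (auto intro: TT_smooth TT.const)

lemma weak_grad_zero: "is_weak_grad D (\<lambda>x::real^'d::finite. 0::real) (\<lambda>x. 0)"
  unfolding is_weak_grad_def set_integrable_def by simp

lemma H10_zero: "(\<lambda>x::real^'d::finite. 0::real) \<in> H10 D"
  unfolding H10_def
  by (intro CollectI exI[of _ "\<lambda>x. 0"] conjI weak_grad_zero exI[of _ "\<lambda>k x. 0"] allI test_fun_zero)
     (simp_all add: set_integrable_def grad_zero)

lemma Hm1_zero: "f \<in> Hminus1 D \<Longrightarrow> f (\<lambda>x::real^'d::finite. 0::real) = 0"
  unfolding Hminus1_def using H10_zero[of D]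
  by (auto dest!: bspec[of _ _ "\<lambda>x. 0"] spec[of _ 0])

lemma meas_comp_pair:
  assumes "(\<lambda>(x,y). F x y) \<in> borel_measurable M" "h \<in> borel_measurable borel"
  shows "(\<lambda>(x,y). h (F x y)) \<in> borel_measurable M"
  using measurable_compose[OF assms(1) assms(2)] by (simp add: case_prod_beta')

lemma meas_bilin_pair:
  fixes A :: "_ \<Rightarrow> _ \<Rightarrow> real^'d::finite^'d" and g1 g2 :: "_ \<Rightarrow> _ \<Rightarrow> real^'d"
  assumes "(\<lambda>(x,y). A x y) \<in> borel_measurable M" "(\<lambda>(x,y). g1 x y) \<in> borel_measurable M"
    "(\<lambda>(x,y). g2 x y) \<in> borel_measurable M"
  shows "(\<lambda>(x,y). g1 x y \<bullet> (A x y *v g2 x y)) \<in> borel_measurable M"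
  using meas_bilin[of "\<lambda>p. A (fst p) (snd p)" M "\<lambda>p. g1 (fst p) (snd p)" "\<lambda>p. g2 (fst p) (snd p)"] assms
  by (simp add: case_prod_beta')

lemma sec_meas:
  fixes F :: "_ \<Rightarrow> _ \<Rightarrow> 'c::topological_space"
  assumes "(\<lambda>(x,y). F x y) \<in> borel_measurable (M \<Otimes>\<^sub>M N)" "y \<in> space N"
  shows "(\<lambda>x. F x y) \<in> borel_measurable M"
  using measurable_Pair1[OF assms] by simp

lemma inner_int_meas:
  fixes F :: "_ \<Rightarrow> _ \<Rightarrow> real"
  assumes sf: "sigma_finite_measure M" and m: "(\<lambda>(x,y). F x y) \<in> borel_measurable (M \<Otimes>\<^sub>M N)"
  shows "(\<lambda>y. \<integral>x. F x y \<partial>M) \<in> borel_measurable N"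
proof -
  have "(\<lambda>(y,x). F x y) \<in> borel_measurable (N \<Otimes>\<^sub>M M)"
    using m measurable_pair_swap_iff[of "\<lambda>(y,x). F x y" N M borel] by (simp add: case_prod_beta')
  then show ?thesis
    using sigma_finite_measure.borel_measurable_lebesgue_integral[OF sf, of "\<lambda>y x. F x y" N] by simp
qed

lemma inner_nn_meas:
  fixes F :: "_ \<Rightarrow> _ \<Rightarrow> ennreal"
  assumes sf: "sigma_finite_measure M" and m: "(\<lambda>(x,y). F x y) \<in> borel_measurable (M \<Otimes>\<^sub>M N)"
  shows "(\<lambda>y. \<integral>\<^sup>+x. F x y \<partial>M) \<in> borel_measurable N"
proof -
  have "(\<lambda>(y,x). F x y) \<in> borel_measurable (N \<Otimes>\<^sub>M M)"
    using m measurable_pair_swap_iff[of "\<lambda>(y,x). F x y" N M borel] by (simp add: case_prod_beta')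
  then show ?thesis
    using sigma_finite_measure.borel_measurable_nn_integral[OF sf, of "\<lambda>y x. F x y" N] by simp
qed

theorem proposition7:
  fixes D :: "(real^'d) set"
    and \<Gamma>1 :: "(real^'g) measure" and \<Gamma>2 :: "(real^'v) measure"
    and f :: "(real^'d \<Rightarrow> real) \<Rightarrow> real"
    and C :: "real^'d \<Rightarrow> ((real^'g) \<times> (real^'v)) \<Rightarrow> real^'d^'d"
    and \<alpha> :: real and \<gamma> :: "(real^'g) \<times> (real^'v) \<Rightarrow> real"
    and u :: "real^'d \<Rightarrow> ((real^'g) \<times> (real^'v)) \<Rightarrow> real"
  defines "\<Gamma> \<equiv> \<Gamma>1 \<Otimes>\<^sub>M \<Gamma>2"
  assumes D_open: "open D" and D_bounded: "bounded D" and D_smooth: "smooth_boundary D"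
    and \<Gamma>1_prob: "prob_space \<Gamma>1" and \<Gamma>1_sets: "sets \<Gamma>1 = sets borel"
    and \<Gamma>2_prob: "prob_space \<Gamma>2" and \<Gamma>2_sets: "sets \<Gamma>2 = sets borel"
    and f_dual: "f \<in> Hminus1 D"
    and C_meas: "(\<lambda>(x,y). C x y) \<in> borel_measurable (restrict_space lborel D \<Otimes>\<^sub>M \<Gamma>)"
    and C_sym: "\<And>x y. x \<in> D \<Longrightarrow> transpose (C x y) = C x y"
    and C_pos: "\<And>x y h. x \<in> D \<Longrightarrow> h \<noteq> 0 \<Longrightarrow> h \<bullet> (C x y *v h) > 0"
    and \<alpha>_pos: "\<alpha> > 0"
    and \<gamma>_meas: "\<gamma> \<in> borel_measurable \<Gamma>"
    and \<gamma>_pos: "\<And>y. \<gamma> y > 0"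
    and C_bounds: "AE y in \<Gamma>. AE x in lborel. x \<in> D \<longrightarrow>
        (\<forall>h. \<alpha> * (norm h)\<^sup>2 \<le> h \<bullet> (C x y *v h) \<and> h \<bullet> (C x y *v h) \<le> \<gamma> y * (norm h)\<^sup>2)"
    and u_X: "u \<in> X_space D \<Gamma>"
    and u_sol: "\<forall>v\<in>X_space D \<Gamma>. a_form D \<Gamma> C u v = F_form \<Gamma> f v"
  shows "u \<in> X_weighted D \<Gamma> (\<lambda>y. 1) C \<and>
         (integrable \<Gamma> \<gamma> \<longrightarrow> u \<in> X_weighted D \<Gamma> \<gamma> C) \<and>
         (integrable \<Gamma> (\<lambda>y. (\<gamma> y)\<^sup>2) \<longrightarrow> u \<in> X_weighted D \<Gamma> (\<lambda>y. (\<gamma> y)\<^sup>2) (\<lambda>x y. mat 1))"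
proof -
  interpret P: prob_space \<Gamma> unfolding \<Gamma>_def by (rule prob_space_pair[OF \<Gamma>1_prob \<Gamma>2_prob])
  define L where "L = restrict_space lborel D"
  have Db: "D \<in> sets lborel" using D_open by simp
  have DL: "D \<inter> space lborel \<in> sets lborel" using Db by simp
  have sfL: "sigma_finite_measure L"
    unfolding L_def by (rule sigma_finite_measure_restrict_space[OF sigma_finite_lborel Db])
  have nnL: "\<And>F. (\<integral>\<^sup>+x. indicator D x * F x \<partial>lborel) = (\<integral>\<^sup>+x. F x \<partial>L)"
    unfolding L_def by (subst nn_integral_restrict_space[OF DL]) (simp add: mult.commute)
  have intL: "\<And>F::_ \<Rightarrow> real. (LINT x:D|lborel. F x) = (\<integral>x. F x \<partial>L)"
    unfolding L_def set_lebesgue_integral_def by (subst integral_restrict_space[OF DL]) simp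
  have AEL: "\<And>P. (AE x in L. P x) \<longleftrightarrow> (AE x in lborel. x \<in> D \<longrightarrow> P x)"
    unfolding L_def by (rule AE_restrict_space_iff[OF DL])
  have spL: "space L = D" unfolding L_def by (simp add: space_restrict_space)

  obtain G0 where ok0: "X_grad_ok D \<Gamma> u G0"
    and fin0: "(\<integral>\<^sup>+ y. (\<integral>\<^sup>+ x. indicator D x * ennreal ((norm (G0 x y))\<^sup>2) \<partial>lborel) \<partial>\<Gamma>) < \<infinity>"
    using u_X unfolding X_space_def by blast
  define Gu where "Gu = Xgrad D \<Gamma> u"
  have okU: "X_grad_ok D \<Gamma> u Gu" unfolding Gu_def Xgrad_def using ok0 by (rule someI[where P="X_grad_ok D \<Gamma> u"])
  have G0m: "(\<lambda>(x,y). G0 x y) \<in> borel_measurable (L \<Otimes>\<^sub>M \<Gamma>)"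
    using ok0 unfolding X_grad_ok_def L_def by blast
  have Gum: "(\<lambda>(x,y). Gu x y) \<in> borel_measurable (L \<Otimes>\<^sub>M \<Gamma>)"
    using okU unfolding X_grad_ok_def L_def by blast
  have um: "(\<lambda>(x,y). u x y) \<in> borel_measurable (L \<Otimes>\<^sub>M \<Gamma>)"
    using ok0 unfolding X_grad_ok_def L_def by blast
  have Cm: "(\<lambda>(x,y). C x y) \<in> borel_measurable (L \<Otimes>\<^sub>M \<Gamma>)"
    using C_meas unfolding L_def .
  define qf where "qf x y = Gu x y \<bullet> (C x y *v Gu x y)" for x y
  have qfm: "(\<lambda>(x,y). qf x y) \<in> borel_measurable (L \<Otimes>\<^sub>M \<Gamma>)"
    unfolding qf_def by (rule meas_bilin_pair[OF Cm Gum Gum])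
  have qf_nn: "x \<in> D \<Longrightarrow> 0 \<le> qf x y" for x y
    using C_pos[of x "Gu x y" y] by (cases "Gu x y = 0") (auto simp: qf_def)
  have nsq: "(\<lambda>v::real^'d. (norm v)\<^sup>2) \<in> borel_measurable borel" by measurable
  have nsqe: "(\<lambda>v::real^'d. ennreal ((norm v)\<^sup>2)) \<in> borel_measurable borel" by measurable
  have Gunm: "(\<lambda>(x,y). (norm (Gu x y))\<^sup>2) \<in> borel_measurable (L \<Otimes>\<^sub>M \<Gamma>)"
    by (rule meas_comp_pair[OF Gum nsq])

  define q where "q y = (\<integral>x. qf x y \<partial>L)" for y
  define p where "p y = (\<integral>x. (norm (Gu x y))\<^sup>2 \<partial>L)" for y
  define g where "g y = f (\<lambda>x. u x y)" for y
  have qm: "q \<in> borel_measurable \<Gamma>" unfolding q_def by (rule inner_int_meas[OF sfL qfm])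

  obtain B0 where B0: "\<And>v. v \<in> H10 D \<Longrightarrow> \<bar>f v\<bar> \<le> B0 * sqrt (LINT x:D|lborel. (norm (wgrad D v x))\<^sup>2)"
    using f_dual unfolding Hminus1_def by blast
  define B where "B = max B0 0"
  have B: "\<And>v. v \<in> H10 D \<Longrightarrow> \<bar>f v\<bar> \<le> B * sqrt (LINT x:D|lborel. (norm (wgrad D v x))\<^sup>2)"
  proof -
    fix v assume "v \<in> H10 D"
    then have "\<bar>f v\<bar> \<le> B0 * sqrt (LINT x:D|lborel. (norm (wgrad D v x))\<^sup>2)" by (rule B0)
    also have "\<dots> \<le> B * sqrt (LINT x:D|lborel. (norm (wgrad D v x))\<^sup>2)"
    proof -
      have "0 \<le> (LINT x:D|lborel. (norm (wgrad D v x))\<^sup>2)"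
        unfolding set_lebesgue_integral_def by (rule integral_nonneg_AE) (auto intro!: AE_I2)
      then show ?thesis unfolding B_def by (intro mult_right_mono) auto
    qed
    finally show "\<bar>f v\<bar> \<le> B * sqrt (LINT x:D|lborel. (norm (wgrad D v x))\<^sup>2)" .
  qed
  have B_nn: "0 \<le> B" by (simp add: B_def)
  define c where "c = B / sqrt \<alpha>"
  have c_nn: "0 \<le> c" using B_nn \<alpha>_pos by (simp add: c_def)

  have AE1: "AE y in \<Gamma>. (\<lambda>x. u x y) \<in> H10 D \<and> is_weak_grad D (\<lambda>x. u x y) (\<lambda>x. Gu x y)"
    using okU unfolding X_grad_ok_def by blast
  have AE2: "AE y in \<Gamma>. is_weak_grad D (\<lambda>x. u x y) (\<lambda>x. G0 x y)"
    using ok0 unfolding X_grad_ok_def by auto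
  have AE5: "AE y in \<Gamma>. AE x in L. (\<forall>h. \<alpha> * (norm h)\<^sup>2 \<le> h \<bullet> (C x y *v h) \<and> h \<bullet> (C x y *v h) \<le> \<gamma> y * (norm h)\<^sup>2)"
    using C_bounds by (simp add: AEL)
  have G0nem: "(\<lambda>(x,y). ennreal ((norm (G0 x y))\<^sup>2)) \<in> borel_measurable (L \<Otimes>\<^sub>M \<Gamma>)"
    by (rule meas_comp_pair[OF G0m nsqe])
  have AE6: "AE y in \<Gamma>. (\<integral>\<^sup>+x. ennreal ((norm (G0 x y))\<^sup>2) \<partial>L) \<noteq> \<infinity>"
  proof (rule nn_integral_PInf_AE)
    show "(\<lambda>y. \<integral>\<^sup>+x. ennreal ((norm (G0 x y))\<^sup>2) \<partial>L) \<in> borel_measurable \<Gamma>"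
      by (rule inner_nn_meas[OF sfL G0nem])
    show "(\<integral>\<^sup>+y. (\<integral>\<^sup>+x. ennreal ((norm (G0 x y))\<^sup>2) \<partial>L) \<partial>\<Gamma>) \<noteq> \<infinity>"
      using fin0 by (simp add: nnL)
  qed
  have perY: "AE y in \<Gamma>. integrable L (\<lambda>x. qf x y) \<and> integrable L (\<lambda>x. (norm (Gu x y))\<^sup>2)
      \<and> \<alpha> * p y \<le> q y \<and> g y \<le> c * sqrt (q y) \<and> 0 \<le> p y"
    using AE1 AE2 AE5 AE6 AE_space
  proof eventually_elim
    case (elim y)
    have y: "y \<in> space \<Gamma>" using elim by blast
    have H: "(\<lambda>x. u x y) \<in> H10 D" and wgU: "is_weak_grad D (\<lambda>x. u x y) (\<lambda>x. Gu x y)"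
      and wg0: "is_weak_grad D (\<lambda>x. u x y) (\<lambda>x. G0 x y)" using elim by blast+
    have cb: "AE x in L. (\<forall>h. \<alpha> * (norm h)\<^sup>2 \<le> h \<bullet> (C x y *v h) \<and> h \<bullet> (C x y *v h) \<le> \<gamma> y * (norm h)\<^sup>2)"
      using elim by blast
    have fin: "(\<integral>\<^sup>+x. ennreal ((norm (G0 x y))\<^sup>2) \<partial>L) \<noteq> \<infinity>" using elim by blast
    have u1: "AE x in L. Gu x y = G0 x y"
      using weak_grad_unique[OF D_open wgU wg0] by (simp add: AEL)
    obtain gg where "is_weak_grad D (\<lambda>x. u x y) gg" using H unfolding H10_def by blast
    then have wgW: "is_weak_grad D (\<lambda>x. u x y) (wgrad D (\<lambda>x. u x y))"
      unfolding wgrad_def by (rule someI[where P="is_weak_grad D (\<lambda>x. u x y)"])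
    have u2: "AE x in L. wgrad D (\<lambda>x. u x y) x = Gu x y"
      using weak_grad_unique[OF D_open wgW wgU] by (simp add: AEL)
    have Gym: "(\<lambda>x. Gu x y) \<in> borel_measurable L" by (rule sec_meas[OF Gum y])
    have Gy2m: "(\<lambda>x. (norm (Gu x y))\<^sup>2) \<in> borel_measurable L" by (rule sec_meas[OF Gunm y])
    have qym: "(\<lambda>x. qf x y) \<in> borel_measurable L" by (rule sec_meas[OF qfm y])
    have Wm: "wgrad D (\<lambda>x. u x y) \<in> borel_measurable L"
      unfolding L_def by (rule weak_grad_meas[OF D_open wgW])
    have P_eq: "(\<integral>\<^sup>+x. ennreal (norm ((norm (Gu x y))\<^sup>2)) \<partial>L) = (\<integral>\<^sup>+x. ennreal ((norm (G0 x y))\<^sup>2) \<partial>L)"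
      by (rule nn_integral_cong_AE) (use u1 in \<open>auto\<close>)
    have int2: "integrable L (\<lambda>x. (norm (Gu x y))\<^sup>2)"
      unfolding integrable_iff_bounded using Gy2m P_eq fin by (simp add: less_top infinity_ennreal_def)
    have qf_le: "AE x in L. norm (qf x y) \<le> norm (\<gamma> y * (norm (Gu x y))\<^sup>2)"
      using cb AE_space
    proof eventually_elim
      case (elim x)
      then have "x \<in> D" using spL by blast
      then have "0 \<le> qf x y" by (rule qf_nn)
      moreover have "qf x y \<le> \<gamma> y * (norm (Gu x y))\<^sup>2" using elim unfolding qf_def by blast
      ultimately show ?case using \<gamma>_pos[of y] by simp
    qed
    have int1: "integrable L (\<lambda>x. qf x y)"
      by (rule Bochner_Integration.integrable_bound[OF _ qym qf_le]) (use int2 in simp)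
    have lo: "AE x in L. \<alpha> * (norm (Gu x y))\<^sup>2 \<le> qf x y"
      using cb by eventually_elim (simp add: qf_def)
    have apq: "\<alpha> * p y \<le> q y"
    proof -
      have "\<alpha> * p y = (\<integral>x. \<alpha> * (norm (Gu x y))\<^sup>2 \<partial>L)" by (simp add: p_def)
      also have "\<dots> \<le> q y" unfolding q_def
        by (rule integral_mono_AE[OF _ int1 lo]) (use int2 in simp)
      finally show ?thesis .
    qed
    have p_nn: "0 \<le> p y" unfolding p_def by (rule integral_nonneg_AE) (auto intro!: AE_I2)
    have "g y \<le> \<bar>f (\<lambda>x. u x y)\<bar>" by (simp add: g_def)
    also have "\<dots> \<le> B * sqrt (LINT x:D|lborel. (norm (wgrad D (\<lambda>x. u x y) x))\<^sup>2)" by (rule B[OF H])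
    also have "(LINT x:D|lborel. (norm (wgrad D (\<lambda>x. u x y) x))\<^sup>2) = p y"
    proof -
      have "(LINT x:D|lborel. (norm (wgrad D (\<lambda>x. u x y) x))\<^sup>2) = (\<integral>x. (norm (wgrad D (\<lambda>x. u x y) x))\<^sup>2 \<partial>L)"
        by (rule intL)
      also have "\<dots> = p y" unfolding p_def
      proof (rule integral_cong_AE)
        show "(\<lambda>x. (norm (wgrad D (\<lambda>x. u x y) x))\<^sup>2) \<in> borel_measurable L"
          using measurable_compose[OF Wm nsq] by simp
        show "(\<lambda>x. (norm (Gu x y))\<^sup>2) \<in> borel_measurable L" by (rule Gy2m)
        show "AE x in L. (norm (wgrad D (\<lambda>x. u x y) x))\<^sup>2 = (norm (Gu x y))\<^sup>2"
          using u2 by eventually_elim simp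
      qed
      finally show ?thesis .
    qed
    also have "B * sqrt (p y) \<le> c * sqrt (q y)"
    proof -
      have "p y \<le> q y / \<alpha>" using apq \<alpha>_pos by (simp add: pos_le_divide_eq mult.commute)
      then have "sqrt (p y) \<le> sqrt (q y) / sqrt \<alpha>" by (metis real_sqrt_le_mono real_sqrt_divide)
      then have "B * sqrt (p y) \<le> B * (sqrt (q y) / sqrt \<alpha>)" using B_nn by (rule mult_left_mono)
      then show ?thesis by (simp add: c_def)
    qed
    finally have "g y \<le> c * sqrt (q y)" .
    then show ?case using int1 int2 apq p_nn by blast
  qed

  have U1: "AE y in \<Gamma>. AE x in L. Gu x y = G0 x y"
    using AE1 AE2
  proof eventually_elim
    case (elim y)
    then have "AE x in lborel. x \<in> D \<longrightarrow> Gu x y = G0 x y"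
      using weak_grad_unique[OF D_open, of "\<lambda>x. u x y" "\<lambda>x. Gu x y" "\<lambda>x. G0 x y"] by blast
    then show ?case by (simp add: AEL)
  qed
  have ident: "\<And>A. A \<in> sets \<Gamma> \<Longrightarrow> (\<integral>y. indicator A y * q y \<partial>\<Gamma>) = (\<integral>y. indicator A y * g y \<partial>\<Gamma>)"
  proof -
    fix A assume A: "A \<in> sets \<Gamma>"
    define v where "v x y = u x y * indicator A y" for x y
    define GA where "GA x y = indicator A y *\<^sub>R G0 x y" for x y
    have indm: "(\<lambda>(x::real^'d,y). indicator A y :: real) \<in> borel_measurable (L \<Otimes>\<^sub>M \<Gamma>)"
      using measurable_compose[OF measurable_snd borel_measurable_indicator[OF A]]
      by (simp add: case_prod_beta')
    have vm: "(\<lambda>(x,y). v x y) \<in> borel_measurable (L \<Otimes>\<^sub>M \<Gamma>)"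
      using borel_measurable_times[OF um indm] by (simp add: v_def case_prod_beta')
    have GAm: "(\<lambda>(x,y). GA x y) \<in> borel_measurable (L \<Otimes>\<^sub>M \<Gamma>)"
      using borel_measurable_scaleR[OF indm G0m] by (simp add: GA_def case_prod_beta')
    have okA: "X_grad_ok D \<Gamma> v GA"
      unfolding X_grad_ok_def
    proof (intro conjI)
      show "(\<lambda>(x,y). v x y) \<in> borel_measurable (restrict_space lborel D \<Otimes>\<^sub>M \<Gamma>)"
        using vm by (simp add: L_def)
      show "(\<lambda>(x,y). GA x y) \<in> borel_measurable (restrict_space lborel D \<Otimes>\<^sub>M \<Gamma>)"
        using GAm by (simp add: L_def)
      show "AE y in \<Gamma>. (\<lambda>x. v x y) \<in> H10 D \<and> is_weak_grad D (\<lambda>x. v x y) (\<lambda>x. GA x y)"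
        using AE1 AE2
      proof eventually_elim
        case (elim y)
        show ?case
        proof (cases "y \<in> A")
          case True
          then show ?thesis using elim by (simp add: v_def GA_def)
        next
          case False
          then show ?thesis by (simp add: v_def GA_def H10_zero weak_grad_zero)
        qed
      qed
    qed
    have "(\<integral>\<^sup>+ y. (\<integral>\<^sup>+ x. indicator D x * ennreal ((norm (GA x y))\<^sup>2) \<partial>lborel) \<partial>\<Gamma>)
        \<le> (\<integral>\<^sup>+ y. (\<integral>\<^sup>+ x. indicator D x * ennreal ((norm (G0 x y))\<^sup>2) \<partial>lborel) \<partial>\<Gamma>)"
    proof (intro nn_integral_mono mult_left_mono ennreal_leI)
      fix x y
      show "(norm (GA x y))\<^sup>2 \<le> (norm (G0 x y))\<^sup>2"
        by (cases "y \<in> A") (simp_all add: GA_def)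
    qed simp
    then have "v \<in> X_space D \<Gamma>" unfolding X_space_def using okA fin0 by (auto intro: le_less_trans)
    then have aF: "a_form D \<Gamma> C u v = F_form \<Gamma> f v" using u_sol by blast
    define Gv where "Gv = Xgrad D \<Gamma> v"
    have okV: "X_grad_ok D \<Gamma> v Gv" unfolding Gv_def Xgrad_def using okA by (rule someI[where P="X_grad_ok D \<Gamma> v"])
    have Gvm: "(\<lambda>(x,y). Gv x y) \<in> borel_measurable (L \<Otimes>\<^sub>M \<Gamma>)"
      using okV unfolding X_grad_ok_def L_def by blast
    have bm: "(\<lambda>(x,y). Gv x y \<bullet> (C x y *v Gu x y)) \<in> borel_measurable (L \<Otimes>\<^sub>M \<Gamma>)"
      by (rule meas_bilin_pair[OF Cm Gvm Gum])
    have "a_form D \<Gamma> C u v = (\<integral>y. (\<integral>x. Gv x y \<bullet> (C x y *v Gu x y) \<partial>L) \<partial>\<Gamma>)"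
      unfolding a_form_def Gv_def[symmetric] Gu_def[symmetric] by (simp add: intL)
    also have "\<dots> = (\<integral>y. indicator A y * q y \<partial>\<Gamma>)"
    proof (rule integral_cong_AE)
      show "(\<lambda>y. \<integral>x. Gv x y \<bullet> (C x y *v Gu x y) \<partial>L) \<in> borel_measurable \<Gamma>"
        by (rule inner_int_meas[OF sfL bm])
      show "(\<lambda>y. indicator A y * q y) \<in> borel_measurable \<Gamma>"
        using A qm by measurable
      have AEV: "AE y in \<Gamma>. is_weak_grad D (\<lambda>x. v x y) (\<lambda>x. Gv x y)"
        using okV unfolding X_grad_ok_def by auto
      have AEA: "AE y in \<Gamma>. is_weak_grad D (\<lambda>x. v x y) (\<lambda>x. GA x y)"
        using okA unfolding X_grad_ok_def by auto
      show "AE y in \<Gamma>. (\<integral>x. Gv x y \<bullet> (C x y *v Gu x y) \<partial>L) = indicator A y * q y"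
        using AEV AEA U1 AE_space
      proof eventually_elim
        case (elim y)
        have y: "y \<in> space \<Gamma>" using elim by blast
        have e1: "AE x in L. Gv x y = GA x y"
        proof -
          have "AE x in lborel. x \<in> D \<longrightarrow> Gv x y = GA x y"
            using weak_grad_unique[OF D_open, of "\<lambda>x. v x y" "\<lambda>x. Gv x y" "\<lambda>x. GA x y"] elim by blast
          then show ?thesis by (simp add: AEL)
        qed
        have "(\<integral>x. Gv x y \<bullet> (C x y *v Gu x y) \<partial>L) = (\<integral>x. indicator A y * qf x y \<partial>L)"
        proof (rule integral_cong_AE)
          show "(\<lambda>x. Gv x y \<bullet> (C x y *v Gu x y)) \<in> borel_measurable L" by (rule sec_meas[OF bm y])
          show "(\<lambda>x. indicator A y * qf x y) \<in> borel_measurable L"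
            using sec_meas[OF qfm y] by simp
          show "AE x in L. Gv x y \<bullet> (C x y *v Gu x y) = indicator A y * qf x y"
          proof -
            have e2: "AE x in L. Gu x y = G0 x y" using elim by blast
            show ?thesis using e1 e2 by eventually_elim (simp add: GA_def qf_def)
          qed
        qed
        also have "\<dots> = indicator A y * q y" by (simp add: q_def)
        finally show ?case .
      qed
    qed
    finally have lhs: "a_form D \<Gamma> C u v = (\<integral>y. indicator A y * q y \<partial>\<Gamma>)" .
    have rhs: "F_form \<Gamma> f v = (\<integral>y. indicator A y * g y \<partial>\<Gamma>)"
      unfolding F_form_def
    proof (rule Bochner_Integration.integral_cong[OF refl])
      fix y
      show "f (\<lambda>x. v x y) = indicator A y * g y"
        by (cases "y \<in> A") (simp_all add: v_def g_def Hm1_zero[OF f_dual])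
    qed
    show "(\<integral>y. indicator A y * q y \<partial>\<Gamma>) = (\<integral>y. indicator A y * g y \<partial>\<Gamma>)"
      using aF lhs rhs by simp
  qed

  have qbound: "AE y in \<Gamma>. q y \<le> c\<^sup>2"
  proof -
    define A where "A n = {y \<in> space \<Gamma>. c\<^sup>2 < q y \<and> q y \<le> real n}" for n :: nat
    have Am: "A n \<in> sets \<Gamma>" for n unfolding A_def using qm by measurable
    have An: "AE y in \<Gamma>. y \<notin> A n" for n
    proof -
      define h where "h y = indicator (A n) y * (q y - c * sqrt (q y))" for y
      have hm: "h \<in> borel_measurable \<Gamma>" unfolding h_def using qm Am by measurable
      have q_on_A: "y \<in> A n \<Longrightarrow> c\<^sup>2 < q y \<and> q y \<le> real n" for y by (simp add: A_def)
      have hpos: "y \<in> A n \<Longrightarrow> 0 < h y" for y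
      proof -
        assume yA: "y \<in> A n"
        then have lt: "c\<^sup>2 < q y" using q_on_A by blast
        have "sqrt (c\<^sup>2) < sqrt (q y)" using lt by (rule real_sqrt_less_mono)
        then have cs: "c < sqrt (q y)" using c_nn by simp
        have qpos: "0 < q y" using lt by (smt (verit) zero_le_power2)
        have "q y = sqrt (q y) * sqrt (q y)" using qpos by simp
        then have "q y - c * sqrt (q y) = sqrt (q y) * (sqrt (q y) - c)" by (simp add: algebra_simps)
        moreover have "0 < sqrt (q y) * (sqrt (q y) - c)" using cs qpos by simp
        ultimately show "0 < h y" using yA by (simp add: h_def)
      qed
      have hnn: "0 \<le> h y" for y
        using hpos[of y] by (cases "y \<in> A n") (auto simp: h_def)
      have bnd: "\<bar>indicator (A n) y * q y\<bar> \<le> real n" for y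
        using q_on_A[of y] c_nn by (cases "y \<in> A n") (auto simp: indicator_def, smt (verit) zero_le_power2)
      have int_q: "integrable \<Gamma> (\<lambda>y. indicator (A n) y * q y)"
        by (rule P.integrable_const_bound[where B="real n"]) (use bnd qm Am in auto)
      have bnd2: "\<bar>indicator (A n) y * (c * sqrt (q y))\<bar> \<le> c * sqrt (real n)" for y
      proof (cases "y \<in> A n")
        case True
        then have "0 \<le> q y" "q y \<le> real n" using q_on_A[of y] by (auto, smt (verit) zero_le_power2)
        then show ?thesis using True c_nn by (auto intro!: mult_left_mono real_sqrt_le_mono)
      qed (use c_nn in simp)
      have int_s: "integrable \<Gamma> (\<lambda>y. indicator (A n) y * (c * sqrt (q y)))"
        by (rule P.integrable_const_bound[where B="c * sqrt (real n)"]) (use bnd2 qm Am in auto)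
      have le: "(\<integral>y. indicator (A n) y * g y \<partial>\<Gamma>) \<le> (\<integral>y. indicator (A n) y * (c * sqrt (q y)) \<partial>\<Gamma>)"
      proof (cases "integrable \<Gamma> (\<lambda>y. indicator (A n) y * g y)")
        case True
        show ?thesis
        proof (rule integral_mono_AE[OF True int_s])
          show "AE y in \<Gamma>. indicator (A n) y * g y \<le> indicator (A n) y * (c * sqrt (q y))"
            using perY by eventually_elim (auto simp: indicator_def)
        qed
      next
        case False
        then have "(\<integral>y. indicator (A n) y * g y \<partial>\<Gamma>) = 0" by (rule not_integrable_integral_eq)
        moreover have "0 \<le> (\<integral>y. indicator (A n) y * (c * sqrt (q y)) \<partial>\<Gamma>)"
        proof (rule integral_nonneg_AE, rule AE_I2)
          fix y
          show "0 \<le> indicator (A n) y * (c * sqrt (q y))"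
          proof (cases "y \<in> A n")
            case True
            then have "0 \<le> q y" using q_on_A[of y] by (smt (verit) zero_le_power2)
            then show ?thesis using True c_nn by simp
          qed simp
        qed
        ultimately show ?thesis by simp
      qed
      have "(\<integral>y. h y \<partial>\<Gamma>) = (\<integral>y. indicator (A n) y * q y \<partial>\<Gamma>) - (\<integral>y. indicator (A n) y * (c * sqrt (q y)) \<partial>\<Gamma>)"
        unfolding h_def using Bochner_Integration.integral_diff[OF int_q int_s]
        by (simp add: right_diff_distrib)
      also have "\<dots> \<le> 0" using le ident[OF Am] by simp
      finally have hle: "(\<integral>y. h y \<partial>\<Gamma>) \<le> 0" .
      have hint: "integrable \<Gamma> h"
        unfolding h_def using Bochner_Integration.integrable_diff[OF int_q int_s] by (simp add: right_diff_distrib)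
      have "0 \<le> (\<integral>y. h y \<partial>\<Gamma>)"
        by (rule integral_nonneg_AE, rule AE_I2, rule hnn)
      then have "(\<integral>y. h y \<partial>\<Gamma>) = 0" using hle by simp
      then have "AE y in \<Gamma>. h y = 0"
        using integral_nonneg_eq_0_iff_AE[OF hint] hnn by (auto intro!: AE_I2)
      then show ?thesis by eventually_elim (use hpos in force)
    qed
    have "AE y in \<Gamma>. \<forall>n. y \<notin> A n" by (subst AE_all_countable) (rule allI, rule An)
    then show ?thesis
    proof (rule AE_mp, intro AE_I2 impI)
      fix y assume y: "y \<in> space \<Gamma>" and nA: "\<forall>n. y \<notin> A n"
      obtain n :: nat where "q y \<le> real n" using real_arch_simple by blast
      then show "q y \<le> c\<^sup>2" using nA y unfolding A_def by force
    qed
  qed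

  have Qb: "AE y in \<Gamma>. (\<integral>\<^sup>+x. ennreal (qf x y) \<partial>L) \<le> ennreal (c\<^sup>2)"
    using perY qbound
  proof eventually_elim
    case (elim y)
    have "(\<integral>\<^sup>+x. ennreal (qf x y) \<partial>L) = ennreal (q y)"
    proof -
      have "AE x in L. 0 \<le> qf x y" by (rule AE_I2) (use qf_nn[of _ y] spL in auto)
      then show ?thesis unfolding q_def using elim(1) by (intro nn_integral_eq_integral) auto
    qed
    then show ?case using elim(2) by (simp add: ennreal_leI)
  qed
  have Pb: "AE y in \<Gamma>. (\<integral>\<^sup>+x. ennreal ((norm (Gu x y))\<^sup>2) \<partial>L) \<le> ennreal (c\<^sup>2 / \<alpha>)"
    using perY qbound
  proof eventually_elim
    case (elim y)
    have "(\<integral>\<^sup>+x. ennreal ((norm (Gu x y))\<^sup>2) \<partial>L) = ennreal (p y)"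
      unfolding p_def using elim(1) by (intro nn_integral_eq_integral) (auto intro!: AE_I2)
    moreover have "p y \<le> c\<^sup>2 / \<alpha>"
      using elim \<alpha>_pos by (simp add: pos_le_divide_eq mult.commute)
    ultimately show ?case by (simp add: ennreal_leI)
  qed
  have qfem: "(\<lambda>(x,y). ennreal (qf x y)) \<in> borel_measurable (L \<Otimes>\<^sub>M \<Gamma>)"
    by (rule meas_comp_pair[OF qfm measurable_ennreal])
  have Gunem: "(\<lambda>(x,y). ennreal ((norm (Gu x y))\<^sup>2)) \<in> borel_measurable (L \<Otimes>\<^sub>M \<Gamma>)"
    by (rule meas_comp_pair[OF Gum nsqe])
  have W1: "u \<in> X_weighted D \<Gamma> (\<lambda>y. 1) C"
  proof -
    have "(\<integral>\<^sup>+ y. (\<integral>\<^sup>+ x. indicator D x * ennreal (1 * (Gu x y \<bullet> (C x y *v Gu x y))) \<partial>lborel) \<partial>\<Gamma>)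
        = (\<integral>\<^sup>+ y. (\<integral>\<^sup>+ x. ennreal (qf x y) \<partial>L) \<partial>\<Gamma>)"
      by (simp add: nnL qf_def)
    also have "\<dots> \<le> (\<integral>\<^sup>+ y. ennreal (c\<^sup>2) \<partial>\<Gamma>)" by (rule nn_integral_mono_AE[OF Qb])
    also have "\<dots> = ennreal (c\<^sup>2)" by (simp add: P.emeasure_space_1)
    also have "\<dots> < \<infinity>" by simp
    finally show ?thesis unfolding X_weighted_def using okU by blast
  qed
  have W2: "u \<in> X_weighted D \<Gamma> \<gamma> C" if int: "integrable \<Gamma> \<gamma>"
  proof -
    have "(\<integral>\<^sup>+ y. (\<integral>\<^sup>+ x. indicator D x * ennreal (\<gamma> y * (Gu x y \<bullet> (C x y *v Gu x y))) \<partial>lborel) \<partial>\<Gamma>)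
        = (\<integral>\<^sup>+ y. ennreal (\<gamma> y) * (\<integral>\<^sup>+ x. ennreal (qf x y) \<partial>L) \<partial>\<Gamma>)"
    proof (rule nn_integral_cong)
      fix y assume y: "y \<in> space \<Gamma>"
      have "(\<integral>\<^sup>+ x. indicator D x * ennreal (\<gamma> y * (Gu x y \<bullet> (C x y *v Gu x y))) \<partial>lborel)
          = (\<integral>\<^sup>+ x. ennreal (\<gamma> y) * ennreal (qf x y) \<partial>L)"
        unfolding nnL
      proof (rule nn_integral_cong)
        fix x assume "x \<in> space L"
        then have "0 \<le> qf x y" using qf_nn spL by auto
        then show "ennreal (\<gamma> y * (Gu x y \<bullet> (C x y *v Gu x y))) = ennreal (\<gamma> y) * ennreal (qf x y)"
          using \<gamma>_pos[of y] by (simp add: qf_def ennreal_mult)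
      qed
      also have "\<dots> = ennreal (\<gamma> y) * (\<integral>\<^sup>+ x. ennreal (qf x y) \<partial>L)"
        by (rule nn_integral_cmult) (rule sec_meas[OF qfem y])
      finally show "(\<integral>\<^sup>+ x. indicator D x * ennreal (\<gamma> y * (Gu x y \<bullet> (C x y *v Gu x y))) \<partial>lborel)
          = ennreal (\<gamma> y) * (\<integral>\<^sup>+ x. ennreal (qf x y) \<partial>L)" .
    qed
    also have "\<dots> \<le> (\<integral>\<^sup>+ y. ennreal (\<gamma> y * c\<^sup>2) \<partial>\<Gamma>)"
    proof (rule nn_integral_mono_AE)
      show "AE y in \<Gamma>. ennreal (\<gamma> y) * (\<integral>\<^sup>+ x. ennreal (qf x y) \<partial>L) \<le> ennreal (\<gamma> y * c\<^sup>2)"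
        using Qb
      proof eventually_elim
        case (elim y)
        then have "ennreal (\<gamma> y) * (\<integral>\<^sup>+ x. ennreal (qf x y) \<partial>L) \<le> ennreal (\<gamma> y) * ennreal (c\<^sup>2)"
          by (rule mult_left_mono) simp
        then show ?case using \<gamma>_pos[of y] by (simp add: ennreal_mult)
      qed
    qed
    also have "\<dots> < \<top>"
      by (rule nn_fin_of_integrable) (use int in simp)
    finally show ?thesis unfolding X_weighted_def using okU by (auto simp: infinity_ennreal_def)
  qed
  have W3: "u \<in> X_weighted D \<Gamma> (\<lambda>y. (\<gamma> y)\<^sup>2) (\<lambda>x y. mat 1)" if int: "integrable \<Gamma> (\<lambda>y. (\<gamma> y)\<^sup>2)"
  proof -
    have "(\<integral>\<^sup>+ y. (\<integral>\<^sup>+ x. indicator D x * ennreal ((\<gamma> y)\<^sup>2 * (Gu x y \<bullet> (mat 1 *v Gu x y))) \<partial>lborel) \<partial>\<Gamma>)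
        = (\<integral>\<^sup>+ y. ennreal ((\<gamma> y)\<^sup>2) * (\<integral>\<^sup>+ x. ennreal ((norm (Gu x y))\<^sup>2) \<partial>L) \<partial>\<Gamma>)"
    proof (rule nn_integral_cong)
      fix y assume y: "y \<in> space \<Gamma>"
      have "(\<integral>\<^sup>+ x. indicator D x * ennreal ((\<gamma> y)\<^sup>2 * (Gu x y \<bullet> (mat 1 *v Gu x y))) \<partial>lborel)
          = (\<integral>\<^sup>+ x. ennreal ((\<gamma> y)\<^sup>2) * ennreal ((norm (Gu x y))\<^sup>2) \<partial>L)"
        unfolding nnL
        by (rule nn_integral_cong) (simp add: ennreal_mult power2_norm_eq_inner)
      also have "\<dots> = ennreal ((\<gamma> y)\<^sup>2) * (\<integral>\<^sup>+ x. ennreal ((norm (Gu x y))\<^sup>2) \<partial>L)"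
        by (rule nn_integral_cmult) (rule sec_meas[OF Gunem y])
      finally show "(\<integral>\<^sup>+ x. indicator D x * ennreal ((\<gamma> y)\<^sup>2 * (Gu x y \<bullet> (mat 1 *v Gu x y))) \<partial>lborel)
          = ennreal ((\<gamma> y)\<^sup>2) * (\<integral>\<^sup>+ x. ennreal ((norm (Gu x y))\<^sup>2) \<partial>L)" .
    qed
    also have "\<dots> \<le> (\<integral>\<^sup>+ y. ennreal ((\<gamma> y)\<^sup>2 * (c\<^sup>2 / \<alpha>)) \<partial>\<Gamma>)"
    proof (rule nn_integral_mono_AE)
      show "AE y in \<Gamma>. ennreal ((\<gamma> y)\<^sup>2) * (\<integral>\<^sup>+ x. ennreal ((norm (Gu x y))\<^sup>2) \<partial>L) \<le> ennreal ((\<gamma> y)\<^sup>2 * (c\<^sup>2 / \<alpha>))"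
        using Pb
      proof eventually_elim
        case (elim y)
        then have "ennreal ((\<gamma> y)\<^sup>2) * (\<integral>\<^sup>+ x. ennreal ((norm (Gu x y))\<^sup>2) \<partial>L) \<le> ennreal ((\<gamma> y)\<^sup>2) * ennreal (c\<^sup>2 / \<alpha>)"
          by (rule mult_left_mono) simp
        moreover have e: "ennreal ((\<gamma> y)\<^sup>2 * (c\<^sup>2 / \<alpha>)) = ennreal ((\<gamma> y)\<^sup>2) * ennreal (c\<^sup>2 / \<alpha>)"
          by (rule ennreal_mult) (use \<alpha>_pos in auto)
        ultimately show ?case by (simp only: e)
      qed
    qed
    also have "\<dots> < \<top>"
      by (rule nn_fin_of_integrable) (use int in simp)
    finally show ?thesis unfolding X_weighted_def using okU by (auto simp: infinity_ennreal_def)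
  qed
  show ?thesis using W1 W2 W3 by blast
qed

end
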